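(* In the category $\mathbf{Lens}$, the classes of all epimorphisms, regular epimorphisms, strong epimorphisms and extremal epimorphisms coincide.
   Context: A lens $F\colon \mathbf{A}\to\mathbf{B}$ between small categories consists of a functor $F\colon\mathbf{A}\to\mathbf{B}$ (the get functor) together with, for each object $A$ of $\mathbf{A}$, a function $\varphi_{F,A}$ from the set of morphisms of $\mathbf{B}$ with domain $FA$ to the set of morphisms of $\mathbf{A}$ with domain $A$, such that: $F(\varphi_{F,A}b)=b$; $\varphi_{F,A}(\mathrm{id}_{FA})=\mathrm{id}_A$; and $\varphi_{F,A}(b'\circ b)=\varphi_{F,A'}(b')\circ\varphi_{F,A}(b)$ whenever $b$ has domain $FA$, $A'$ is the codomain of $\varphi_{F,A}b$, and $b'$ has domain $FA'$. $\mathbf{Lens}$ is the category of small categories and lenses, with composite of $F\colon\mathbf{A}\to\mathbf{B}$, $G\colon\mathbf{B}\to\mathbf{C}$ having get functor $G\circ F$ and puts $\varphi_{G\circ F,A}(c)=\varphi_{F,A}(\varphi_{G,FA}(c))$. *)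

theory Defs
  imports Main
begin

record ('o, 'a) category =
  Ob  :: "'o set"
  Hom :: "'a set"
  Src :: "'a \<Rightarrow> 'o"
  Tgt :: "'a \<Rightarrow> 'o"
  Idt :: "'o \<Rightarrow> 'a"
  Cmp :: "'a \<Rightarrow> 'a \<Rightarrow> 'a"   (* Cmp g f = g \<circ> f *)

definition is_category :: "('o, 'a) category \<Rightarrow> bool" where
  "is_category C \<longleftrightarrow>
     (\<forall>f\<in>Hom C. Src C f \<in> Ob C \<and> Tgt C f \<in> Ob C) \<and>
     (\<forall>x\<in>Ob C. Idt C x \<in> Hom C \<and> Src C (Idt C x) = x \<and> Tgt C (Idt C x) = x) \<and>
     (\<forall>f\<in>Hom C. \<forall>g\<in>Hom C. Tgt C f = Src C g \<longrightarrow>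
        Cmp C g f \<in> Hom C \<and> Src C (Cmp C g f) = Src C f \<and> Tgt C (Cmp C g f) = Tgt C g) \<and>
     (\<forall>f\<in>Hom C. \<forall>g\<in>Hom C. \<forall>h\<in>Hom C. Tgt C f = Src C g \<longrightarrow> Tgt C g = Src C h \<longrightarrow>
        Cmp C h (Cmp C g f) = Cmp C (Cmp C h g) f) \<and>
     (\<forall>f\<in>Hom C. Cmp C (Idt C (Tgt C f)) f = f \<and> Cmp C f (Idt C (Src C f)) = f)"

definition epi :: "('o, 'a) category \<Rightarrow> 'a \<Rightarrow> bool" where
  "epi K e \<longleftrightarrow> e \<in> Hom K \<and>
     (\<forall>g\<in>Hom K. \<forall>h\<in>Hom K. Src K g = Tgt K e \<longrightarrow> Src K h = Tgt K e \<longrightarrow> Tgt K g = Tgt K h \<longrightarrow>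
        Cmp K g e = Cmp K h e \<longrightarrow> g = h)"

definition mono :: "('o, 'a) category \<Rightarrow> 'a \<Rightarrow> bool" where
  "mono K m \<longleftrightarrow> m \<in> Hom K \<and>
     (\<forall>g\<in>Hom K. \<forall>h\<in>Hom K. Tgt K g = Src K m \<longrightarrow> Tgt K h = Src K m \<longrightarrow> Src K g = Src K h \<longrightarrow>
        Cmp K m g = Cmp K m h \<longrightarrow> g = h)"

definition iso :: "('o, 'a) category \<Rightarrow> 'a \<Rightarrow> bool" where
  "iso K f \<longleftrightarrow> f \<in> Hom K \<and>
     (\<exists>g\<in>Hom K. Src K g = Tgt K f \<and> Tgt K g = Src K f \<and>
        Cmp K g f = Idt K (Src K f) \<and> Cmp K f g = Idt K (Tgt K f))"

definition coequalizer :: "('o, 'a) category \<Rightarrow> 'a \<Rightarrow> 'a \<Rightarrow> 'a \<Rightarrow> bool" where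
  "coequalizer K u v e \<longleftrightarrow>
     u \<in> Hom K \<and> v \<in> Hom K \<and> Src K u = Src K v \<and> Tgt K u = Tgt K v \<and>
     e \<in> Hom K \<and> Src K e = Tgt K u \<and> Cmp K e u = Cmp K e v \<and>
     (\<forall>h\<in>Hom K. Src K h = Tgt K u \<longrightarrow> Cmp K h u = Cmp K h v \<longrightarrow>
        (\<exists>!k. k \<in> Hom K \<and> Src K k = Tgt K e \<and> Tgt K k = Tgt K h \<and> Cmp K k e = h))"

definition regular_epi :: "('o, 'a) category \<Rightarrow> 'a \<Rightarrow> bool" where
  "regular_epi K e \<longleftrightarrow> (\<exists>u v. coequalizer K u v e)"

definition strong_epi :: "('o, 'a) category \<Rightarrow> 'a \<Rightarrow> bool" where
  "strong_epi K e \<longleftrightarrow> epi K e \<and>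
     (\<forall>m u v. mono K m \<longrightarrow> u \<in> Hom K \<longrightarrow> v \<in> Hom K \<longrightarrow>
        Src K u = Src K e \<longrightarrow> Tgt K u = Src K m \<longrightarrow>
        Src K v = Tgt K e \<longrightarrow> Tgt K v = Tgt K m \<longrightarrow>
        Cmp K m u = Cmp K v e \<longrightarrow>
        (\<exists>d\<in>Hom K. Src K d = Tgt K e \<and> Tgt K d = Src K m \<and>
           Cmp K d e = u \<and> Cmp K m d = v))"

definition extremal_epi :: "('o, 'a) category \<Rightarrow> 'a \<Rightarrow> bool" where
  "extremal_epi K e \<longleftrightarrow> epi K e \<and>
     (\<forall>m g. mono K m \<longrightarrow> g \<in> Hom K \<longrightarrow>
        Src K g = Src K e \<longrightarrow> Tgt K g = Src K m \<longrightarrow> Tgt K m = Tgt K e \<longrightarrow>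
        Cmp K m g = e \<longrightarrow> iso K m)"

type_synonym 'u smallcat = "('u, 'u) category"

text \<open>A lens: source and target category, get functor (on objects and on arrows),
  and the put operation lput A b = phi_{F,A}(b).  All data are extensional
  (undefined outside their intended domains), so that HOL equality of lenses is
  the intended equality of morphisms in Lens.\<close>
record 'u lens =
  lsrc :: "'u smallcat"
  ltgt :: "'u smallcat"
  lob  :: "'u \<Rightarrow> 'u"
  lar  :: "'u \<Rightarrow> 'u"
  lput :: "'u \<Rightarrow> 'u \<Rightarrow> 'u"

definition is_lens :: "'u lens \<Rightarrow> bool" where
  "is_lens F \<longleftrightarrow>
    (let A = lsrc F; B = ltgt F in
     is_category A \<and> is_category B \<and>
     \<comment> \<open>get functor\<close>
     (\<forall>x\<in>Ob A. lob F x \<in> Ob B) \<and>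
     (\<forall>f\<in>Hom A. lar F f \<in> Hom B \<and> Src B (lar F f) = lob F (Src A f) \<and>
                 Tgt B (lar F f) = lob F (Tgt A f)) \<and>
     (\<forall>x\<in>Ob A. lar F (Idt A x) = Idt B (lob F x)) \<and>
     (\<forall>f\<in>Hom A. \<forall>g\<in>Hom A. Tgt A f = Src A g \<longrightarrow>
        lar F (Cmp A g f) = Cmp B (lar F g) (lar F f)) \<and>
     \<comment> \<open>put: phi_{F,x} maps arrows of B out of F x to arrows of A out of x\<close>
     (\<forall>x\<in>Ob A. \<forall>b\<in>Hom B. Src B b = lob F x \<longrightarrow>
        lput F x b \<in> Hom A \<and> Src A (lput F x b) = x \<and> lar F (lput F x b) = b) \<and>
     (\<forall>x\<in>Ob A. lput F x (Idt B (lob F x)) = Idt A x) \<and>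
     (\<forall>x\<in>Ob A. \<forall>b\<in>Hom B. \<forall>b'\<in>Hom B. Src B b = lob F x \<longrightarrow> Src B b' = Tgt B b \<longrightarrow>
        lput F x (Cmp B b' b) = Cmp A (lput F (Tgt A (lput F x b)) b') (lput F x b)) \<and>
     \<comment> \<open>extensionality\<close>
     (\<forall>x. x \<notin> Ob A \<longrightarrow> lob F x = undefined) \<and>
     (\<forall>f. f \<notin> Hom A \<longrightarrow> lar F f = undefined) \<and>
     (\<forall>x b. \<not> (x \<in> Ob A \<and> b \<in> Hom B \<and> Src B b = lob F x) \<longrightarrow> lput F x b = undefined))"

definition id_lens :: "'u smallcat \<Rightarrow> 'u lens" where
  "id_lens C = \<lparr> lsrc = C, ltgt = C,
     lob = (\<lambda>x. if x \<in> Ob C then x else undefined),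
     lar = (\<lambda>f. if f \<in> Hom C then f else undefined),
     lput = (\<lambda>x b. if x \<in> Ob C \<and> b \<in> Hom C \<and> Src C b = x then b else undefined) \<rparr>"

definition comp_lens :: "'u lens \<Rightarrow> 'u lens \<Rightarrow> 'u lens" where
  "comp_lens G F = \<lparr> lsrc = lsrc F, ltgt = ltgt G,
     lob = (\<lambda>x. if x \<in> Ob (lsrc F) then lob G (lob F x) else undefined),
     lar = (\<lambda>f. if f \<in> Hom (lsrc F) then lar G (lar F f) else undefined),
     lput = (\<lambda>x c. if x \<in> Ob (lsrc F) \<and> c \<in> Hom (ltgt G) \<and> Src (ltgt G) c = lob G (lob F x)
                   then lput F x (lput G (lob F x) c) else undefined) \<rparr>"

definition LensCat :: "('u smallcat, 'u lens) category" where
  "LensCat = \<lparr> Ob = {C. is_category C}, Hom = {F. is_lens F},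
     Src = lsrc, Tgt = ltgt, Idt = id_lens, Cmp = comp_lens \<rparr>"

end

theory Submission
  imports Defs
begin


lemma enc_ex: assumes "infinite (UNIV :: 'u set)" shows "\<exists>enc :: 'u \<times> 'u \<Rightarrow> 'u. inj enc"
proof -
  have h2: "ordLeq3 (card_of ((UNIV::'u set) \<times> (UNIV::'u set))) (card_of (UNIV::'u set))"
    using card_of_Times_same_infinite[OF assms] unfolding ordIso_iff_ordLeq by (rule conjunct1)
  have "\<exists>f :: 'u \<times> 'u \<Rightarrow> 'u. inj_on f (UNIV \<times> UNIV) \<and> f ` (UNIV \<times> UNIV) \<le> UNIV"
    using h2 unfolding card_of_ordLeq[symmetric] .
  thus ?thesis by simp
qed

context fixes C :: "('o,'a) category" assumes cat: "is_category C"
begin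
lemma cs[simp]: "f \<in> Hom C \<Longrightarrow> Src C f \<in> Ob C" using cat unfolding is_category_def by blast
lemma ct[simp]: "f \<in> Hom C \<Longrightarrow> Tgt C f \<in> Ob C" using cat unfolding is_category_def by blast
lemma ci[simp]: "x \<in> Ob C \<Longrightarrow> Idt C x \<in> Hom C" using cat unfolding is_category_def by blast
lemma cis[simp]: "x \<in> Ob C \<Longrightarrow> Src C (Idt C x) = x" using cat unfolding is_category_def by blast
lemma cit[simp]: "x \<in> Ob C \<Longrightarrow> Tgt C (Idt C x) = x" using cat unfolding is_category_def by blast
lemma cc[simp]: "f \<in> Hom C \<Longrightarrow> g \<in> Hom C \<Longrightarrow> Tgt C f = Src C g \<Longrightarrow> Cmp C g f \<in> Hom C"
  using cat unfolding is_category_def by blast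
lemma ccs[simp]: "f \<in> Hom C \<Longrightarrow> g \<in> Hom C \<Longrightarrow> Tgt C f = Src C g \<Longrightarrow> Src C (Cmp C g f) = Src C f"
  using cat unfolding is_category_def by blast
lemma cct[simp]: "f \<in> Hom C \<Longrightarrow> g \<in> Hom C \<Longrightarrow> Tgt C f = Src C g \<Longrightarrow> Tgt C (Cmp C g f) = Tgt C g"
  using cat unfolding is_category_def by blast
lemma cassoc: "f \<in> Hom C \<Longrightarrow> g \<in> Hom C \<Longrightarrow> h \<in> Hom C \<Longrightarrow> Tgt C f = Src C g \<Longrightarrow> Tgt C g = Src C h \<Longrightarrow>
        Cmp C h (Cmp C g f) = Cmp C (Cmp C h g) f"
  using cat unfolding is_category_def by blast
lemma cidl[simp]: "f \<in> Hom C \<Longrightarrow> Cmp C (Idt C (Tgt C f)) f = f" using cat unfolding is_category_def by blast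
lemma cidr[simp]: "f \<in> Hom C \<Longrightarrow> Cmp C f (Idt C (Src C f)) = f" using cat unfolding is_category_def by blast
end

context fixes F :: "'u lens" assumes L: "is_lens F"
begin
lemma lcs[simp]: "is_category (lsrc F)" using L unfolding is_lens_def Let_def by blast
lemma lct[simp]: "is_category (ltgt F)" using L unfolding is_lens_def Let_def by blast
lemma lob[simp]: "x \<in> Ob (lsrc F) \<Longrightarrow> lob F x \<in> Ob (ltgt F)" using L unfolding is_lens_def Let_def by blast
lemma lar[simp]: "f \<in> Hom (lsrc F) \<Longrightarrow> lar F f \<in> Hom (ltgt F)" using L unfolding is_lens_def Let_def by blast
lemma lars[simp]: "f \<in> Hom (lsrc F) \<Longrightarrow> Src (ltgt F) (lar F f) = lob F (Src (lsrc F) f)" using L unfolding is_lens_def Let_def by blast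
lemma lart[simp]: "f \<in> Hom (lsrc F) \<Longrightarrow> Tgt (ltgt F) (lar F f) = lob F (Tgt (lsrc F) f)" using L unfolding is_lens_def Let_def by blast
lemma lari[simp]: "x \<in> Ob (lsrc F) \<Longrightarrow> lar F (Idt (lsrc F) x) = Idt (ltgt F) (lob F x)" using L unfolding is_lens_def Let_def by blast
lemma larc[simp]: "f \<in> Hom (lsrc F) \<Longrightarrow> g \<in> Hom (lsrc F) \<Longrightarrow> Tgt (lsrc F) f = Src (lsrc F) g \<Longrightarrow>
        lar F (Cmp (lsrc F) g f) = Cmp (ltgt F) (lar F g) (lar F f)" using L unfolding is_lens_def Let_def by blast
lemma lp[simp]: "x \<in> Ob (lsrc F) \<Longrightarrow> b \<in> Hom (ltgt F) \<Longrightarrow> Src (ltgt F) b = lob F x \<Longrightarrow> lput F x b \<in> Hom (lsrc F)"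
  using L unfolding is_lens_def Let_def by blast
lemma lps[simp]: "x \<in> Ob (lsrc F) \<Longrightarrow> b \<in> Hom (ltgt F) \<Longrightarrow> Src (ltgt F) b = lob F x \<Longrightarrow> Src (lsrc F) (lput F x b) = x"
  using L unfolding is_lens_def Let_def by blast
lemma lpa[simp]: "x \<in> Ob (lsrc F) \<Longrightarrow> b \<in> Hom (ltgt F) \<Longrightarrow> Src (ltgt F) b = lob F x \<Longrightarrow> lar F (lput F x b) = b"
  using L unfolding is_lens_def Let_def by blast
lemma lpt: "x \<in> Ob (lsrc F) \<Longrightarrow> b \<in> Hom (ltgt F) \<Longrightarrow> Src (ltgt F) b = lob F x \<Longrightarrow> lob F (Tgt (lsrc F) (lput F x b)) = Tgt (ltgt F) b"
  by (metis lp lpa lart)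
lemma lpi[simp]: "x \<in> Ob (lsrc F) \<Longrightarrow> lput F x (Idt (ltgt F) (lob F x)) = Idt (lsrc F) x"
  using L unfolding is_lens_def Let_def by blast
lemma lpc: "x \<in> Ob (lsrc F) \<Longrightarrow> b \<in> Hom (ltgt F) \<Longrightarrow> b' \<in> Hom (ltgt F) \<Longrightarrow> Src (ltgt F) b = lob F x \<Longrightarrow> Src (ltgt F) b' = Tgt (ltgt F) b \<Longrightarrow>
        lput F x (Cmp (ltgt F) b' b) = Cmp (lsrc F) (lput F (Tgt (lsrc F) (lput F x b)) b') (lput F x b)"
  using L unfolding is_lens_def Let_def by blast
lemma lobe: "x \<notin> Ob (lsrc F) \<Longrightarrow> lob F x = undefined" using L unfolding is_lens_def Let_def by blast
lemma lare: "f \<notin> Hom (lsrc F) \<Longrightarrow> lar F f = undefined" using L unfolding is_lens_def Let_def by blast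
lemma lpe: "\<not> (x \<in> Ob (lsrc F) \<and> b \<in> Hom (ltgt F) \<and> Src (ltgt F) b = lob F x) \<Longrightarrow> lput F x b = undefined"
  using L unfolding is_lens_def Let_def by blast
end

lemma lens_eqI:
  fixes F G :: "'u lens"
  assumes "lsrc F = lsrc G" "ltgt F = ltgt G" "\<And>x. lob F x = lob G x" "\<And>f. lar F f = lar G f"
    "\<And>x b. lput F x b = lput G x b"
  shows "F = G"
  using assms by (intro lens.equality) (auto simp: fun_eq_iff)



lemma id_lens_lens: "is_category C \<Longrightarrow> is_lens (id_lens C)"
  unfolding is_lens_def id_lens_def Let_def by (auto simp: cassoc)

lemma id_lens_simps[simp]: "lsrc (id_lens C) = C" "ltgt (id_lens C) = C"
  by (auto simp: id_lens_def)

lemma comp_simps[simp]: "lsrc (comp_lens G F) = lsrc F" "ltgt (comp_lens G F) = ltgt G"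
  by (auto simp: comp_lens_def)

lemma comp_lens_lens:
  assumes F: "is_lens F" and G: "is_lens G" and eq: "ltgt F = lsrc G"
  shows "is_lens (comp_lens G F)"
proof -
  note FF = lcs[OF F] lct[OF F] lob[OF F] lar[OF F] lars[OF F] lart[OF F] lari[OF F] larc[OF F] lp[OF F] lps[OF F] lpa[OF F] lpi[OF F]
  note FF' = FF[unfolded eq]
  note GG = lcs[OF G] lct[OF G] lob[OF G] lar[OF G] lars[OF G] lart[OF G] lari[OF G] larc[OF G] lp[OF G] lps[OF G] lpa[OF G] lpi[OF G]
  note lpcF = lpc[OF F, unfolded eq] and lptF = lpt[OF F, unfolded eq]
  show ?thesis
    unfolding is_lens_def Let_def comp_lens_def
    apply (simp add: FF' GG)
    apply (intro conjI ballI allI impI)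
    subgoal for x b b'
      using lpcF[of x "lput G (lob F x) b" "lput G (Tgt (lsrc G) (lput G (lob F x) b)) b'"]
            lpc[OF G, of "lob F x" b b'] lptF[of x "lput G (lob F x) b"] lpt[OF G, of "lob F x" b]
      by (simp add: FF' GG)
    subgoal for x b b'
      using lptF[of x "lput G (lob F x) b"] lpt[OF G, of "lob F x" b]
      by (simp add: FF' GG)
    done
qed

lemma comp_id_left:
  assumes F: "is_lens F" shows "comp_lens (id_lens (ltgt F)) F = F"
  by (rule lens_eqI) (auto simp: comp_lens_def id_lens_def lobe[OF F] lare[OF F] lpe[OF F] lp[OF F] lps[OF F] lob[OF F] lar[OF F])

lemma comp_id_right:
  assumes F: "is_lens F" shows "comp_lens F (id_lens (lsrc F)) = F"
  by (rule lens_eqI) (auto simp: comp_lens_def id_lens_def lobe[OF F] lare[OF F] lpe[OF F] lp[OF F] lps[OF F] lob[OF F] lar[OF F])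

lemma comp_assoc:
  assumes F: "is_lens F" and G: "is_lens G" and H: "is_lens H"
    and e1: "ltgt F = lsrc G" and e2: "ltgt G = lsrc H"
  shows "comp_lens H (comp_lens G F) = comp_lens (comp_lens H G) F"
proof -
  note FF = lob[OF F] lar[OF F] lars[OF F] lp[OF F] lpa[OF F] lps[OF F]
  note FF' = FF[unfolded e1]
  note GG = lob[OF G] lar[OF G] lars[OF G] lp[OF G] lpa[OF G] lps[OF G]
  note GG' = GG[unfolded e2]
  note HH = lob[OF H] lar[OF H] lars[OF H] lp[OF H] lpa[OF H] lps[OF H]
  show ?thesis
    by (rule lens_eqI) (auto simp: comp_lens_def FF' GG' HH e1 e2)
qed

lemma LensCat_simps[simp]: "Ob LensCat = {C. is_category C}" "Hom LensCat = {F. is_lens F}"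
  "Src LensCat = lsrc" "Tgt LensCat = ltgt" "Idt LensCat = id_lens" "Cmp LensCat = comp_lens"
  by (auto simp: LensCat_def)

lemma LensCat_cat: "is_category LensCat"
  unfolding is_category_def
  by (auto simp: id_lens_lens comp_lens_lens comp_assoc comp_id_left comp_id_right)



lemma ex1_same: "\<exists>!x. P x \<Longrightarrow> P a \<Longrightarrow> P b \<Longrightarrow> a = b" by blast

lemma monoD: "mono K m \<Longrightarrow> g \<in> Hom K \<Longrightarrow> h \<in> Hom K \<Longrightarrow> Tgt K g = Src K m \<Longrightarrow> Tgt K h = Src K m \<Longrightarrow> Src K g = Src K h \<Longrightarrow>
        Cmp K m g = Cmp K m h \<Longrightarrow> g = h" unfolding mono_def by blast
lemma epiD: "epi K e \<Longrightarrow> g \<in> Hom K \<Longrightarrow> h \<in> Hom K \<Longrightarrow> Src K g = Tgt K e \<Longrightarrow> Src K h = Tgt K e \<Longrightarrow> Tgt K g = Tgt K h \<Longrightarrow>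
        Cmp K g e = Cmp K h e \<Longrightarrow> g = h" unfolding epi_def by blast

context fixes K :: "('o,'a) category" assumes cat: "is_category K"
begin

lemma reg_epi: assumes "regular_epi K e" shows "epi K e"
proof -
  obtain u v where c: "coequalizer K u v e" using assms unfolding regular_epi_def by blast
  have e: "e \<in> Hom K" "Src K e = Tgt K u" "Cmp K e u = Cmp K e v" "u \<in> Hom K" "v \<in> Hom K"
      "Src K u = Src K v" "Tgt K u = Tgt K v"
      and univ: "\<forall>h\<in>Hom K. Src K h = Tgt K u \<longrightarrow> Cmp K h u = Cmp K h v \<longrightarrow>
        (\<exists>!k. k \<in> Hom K \<and> Src K k = Tgt K e \<and> Tgt K k = Tgt K h \<and> Cmp K k e = h)"
      using c unfolding coequalizer_def by simp_all
  show ?thesis unfolding epi_def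
  proof (intro conjI ballI impI)
    show "e \<in> Hom K" using e by blast
    fix g h assume g: "g \<in> Hom K" and h: "h \<in> Hom K" and gs: "Src K g = Tgt K e" and hs: "Src K h = Tgt K e"
      and gh: "Tgt K g = Tgt K h" and eq: "Cmp K g e = Cmp K h e"
    have ge: "Cmp K g e \<in> Hom K" "Src K (Cmp K g e) = Tgt K u" "Tgt K (Cmp K g e) = Tgt K g"
      using e g gs cat by auto
    have "Cmp K (Cmp K g e) u = Cmp K g (Cmp K e u)" using cassoc[OF cat, of u e g] e g gs by simp
    also have "\<dots> = Cmp K g (Cmp K e v)" using e by simp
    also have "\<dots> = Cmp K (Cmp K g e) v" using cassoc[OF cat, of v e g] e g gs by simp
    finally have "\<exists>!k. k \<in> Hom K \<and> Src K k = Tgt K e \<and> Tgt K k = Tgt K (Cmp K g e) \<and> Cmp K k e = Cmp K g e"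
      using univ ge by blast
    then show "g = h" by (rule ex1_same) (use g h gs hs gh eq ge(3) in auto)
  qed
qed
lemma reg_strong: assumes "regular_epi K e" shows "strong_epi K e"
proof -
  obtain u v where c: "coequalizer K u v e" using assms unfolding regular_epi_def by blast
  have ep: "epi K e" by (rule reg_epi[OF assms])
  have e: "e \<in> Hom K" "Src K e = Tgt K u" "Cmp K e u = Cmp K e v" "u \<in> Hom K" "v \<in> Hom K"
      "Src K u = Src K v" "Tgt K u = Tgt K v"
      and univ: "\<forall>h\<in>Hom K. Src K h = Tgt K u \<longrightarrow> Cmp K h u = Cmp K h v \<longrightarrow>
        (\<exists>!k. k \<in> Hom K \<and> Src K k = Tgt K e \<and> Tgt K k = Tgt K h \<and> Cmp K k e = h)"
      using c unfolding coequalizer_def by blast+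
  show ?thesis unfolding strong_epi_def
  proof (intro conjI ep allI impI)
    fix m f g assume m: "mono K m" and f: "f \<in> Hom K" and g: "g \<in> Hom K" and fs: "Src K f = Src K e"
      and ft: "Tgt K f = Src K m" and gs: "Src K g = Tgt K e" and gt: "Tgt K g = Tgt K m"
      and sq: "Cmp K m f = Cmp K g e"
    have mh: "m \<in> Hom K" using m unfolding mono_def by blast
    have "Cmp K m (Cmp K f u) = Cmp K (Cmp K m f) u" using cassoc[OF cat, of u f m] e f fs ft mh by simp
    also have "\<dots> = Cmp K (Cmp K g e) u" using sq by simp
    also have "\<dots> = Cmp K g (Cmp K e u)" using cassoc[OF cat, of u e g] e g gs by simp
    also have "\<dots> = Cmp K g (Cmp K e v)" using e by simp
    also have "\<dots> = Cmp K (Cmp K g e) v" using cassoc[OF cat, of v e g] e g gs by simp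
    also have "\<dots> = Cmp K (Cmp K m f) v" using sq by simp
    also have "\<dots> = Cmp K m (Cmp K f v)" using cassoc[OF cat, of v f m] e f fs ft mh by simp
    finally have mm: "Cmp K m (Cmp K f u) = Cmp K m (Cmp K f v)" .
    have fu: "Cmp K f u \<in> Hom K" "Tgt K (Cmp K f u) = Src K m" "Src K (Cmp K f u) = Src K u"
      using cat e f fs ft by auto
    have fv: "Cmp K f v \<in> Hom K" "Tgt K (Cmp K f v) = Src K m" "Src K (Cmp K f v) = Src K u"
      using cat e f fs ft by auto
    have fuv: "Cmp K f u = Cmp K f v"
      using monoD[OF m fu(1) fv(1) fu(2) fv(2)] fu fv mm by simp
    have "Src K f = Tgt K u" using fs e by simp
    from univ[rule_format, OF f this fuv] obtain k where k: "k \<in> Hom K" "Src K k = Tgt K e" "Tgt K k = Tgt K f" "Cmp K k e = f"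
      by blast
    have "Cmp K (Cmp K m k) e = Cmp K m (Cmp K k e)" using cassoc[OF cat, of e k m] k e mh ft by simp
    also have "\<dots> = Cmp K g e" using k sq by simp
    finally have eqq: "Cmp K (Cmp K m k) e = Cmp K g e" .
    have mk: "Cmp K m k \<in> Hom K" "Src K (Cmp K m k) = Tgt K e" "Tgt K (Cmp K m k) = Tgt K m"
      using cat k mh ft by auto
    have "Cmp K m k = g" using epiD[OF ep mk(1) g] mk g gs gt eqq by simp
    then show "\<exists>d\<in>Hom K. Src K d = Tgt K e \<and> Tgt K d = Src K m \<and> Cmp K d e = f \<and> Cmp K m d = g"
      using k ft by auto
  qed
qed

lemma strong_extremal: assumes "strong_epi K e" shows "extremal_epi K e"
  unfolding extremal_epi_def
proof (intro conjI allI impI)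
  show ep: "epi K e" using assms unfolding strong_epi_def by blast
  have eh: "e \<in> Hom K" using ep unfolding epi_def by blast
  fix m g assume m: "mono K m" and g: "g \<in> Hom K" and gs: "Src K g = Src K e" and gt: "Tgt K g = Src K m"
    and mt: "Tgt K m = Tgt K e" and eq: "Cmp K m g = e"
  have mh: "m \<in> Hom K" using m unfolding mono_def by blast
  have sq: "Cmp K m g = Cmp K (Idt K (Tgt K e)) e" using eq cat eh by simp
  have ih: "Idt K (Tgt K e) \<in> Hom K" "Src K (Idt K (Tgt K e)) = Tgt K e" "Tgt K (Idt K (Tgt K e)) = Tgt K m"
    using cat eh mt by auto
  have "\<exists>d\<in>Hom K. Src K d = Tgt K e \<and> Tgt K d = Src K m \<and> Cmp K d e = g \<and> Cmp K m d = Idt K (Tgt K e)"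
    using assms m g gs gt ih sq unfolding strong_epi_def by blast
  then obtain d where d: "d \<in> Hom K" "Src K d = Tgt K e" "Tgt K d = Src K m" "Cmp K d e = g"
    "Cmp K m d = Idt K (Tgt K e)" by blast
  have "Cmp K m (Cmp K d m) = Cmp K (Cmp K m d) m" using cassoc[OF cat, of m d m] d mh mt by simp
  also have "\<dots> = m" using d mt cat mh by (metis cidl)
  also have "\<dots> = Cmp K m (Idt K (Src K m))" using cat mh by simp
  finally have mm: "Cmp K m (Cmp K d m) = Cmp K m (Idt K (Src K m))" .
  have dm1: "Cmp K d m \<in> Hom K" "Tgt K (Cmp K d m) = Src K m" "Src K (Cmp K d m) = Src K m"
    using cat d mh mt by auto
  have dm2: "Idt K (Src K m) \<in> Hom K" "Tgt K (Idt K (Src K m)) = Src K m" "Src K (Idt K (Src K m)) = Src K m"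
    using cat mh by auto
  have dm: "Cmp K d m = Idt K (Src K m)"
    using monoD[OF m dm1(1) dm2(1)] dm1 dm2 mm by simp
  show "iso K m" unfolding iso_def using mh d dm mt by auto
qed

end


locale dbl =
  fixes F :: "'u lens" and enc :: "'u \<times> 'u \<Rightarrow> 'u" and c0 c1 :: 'u
  assumes L: "is_lens F" and inj: "inj enc" and c01: "c0 \<noteq> c1"
begin

abbreviation "A \<equiv> lsrc F"
abbreviation "B \<equiv> ltgt F"
definition "S = lob F ` Ob A"
definition "tg y c = (if y \<in> S then c0 else c)"
definition "tO y c = enc (y, tg y c)"
definition "tA b c = enc (b, tg (Src B b) c)"
definition "dec = inv enc"

definition C :: "'u smallcat" where
  "C = \<lparr>Ob = {tO y c | y c. y \<in> Ob B \<and> c \<in> {c0,c1}}, Hom = {tA b c | b c. b \<in> Hom B \<and> c \<in> {c0,c1}},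
        Src = \<lambda>g. tO (Src B (fst (dec g))) (snd (dec g)), Tgt = \<lambda>g. tO (Tgt B (fst (dec g))) (snd (dec g)),
        Idt = \<lambda>z. tA (Idt B (fst (dec z))) (snd (dec z)),
        Cmp = \<lambda>g f. tA (Cmp B (fst (dec g)) (fst (dec f))) (snd (dec f))\<rparr>"

definition G :: "'u \<Rightarrow> 'u lens" where
  "G c = \<lparr>lsrc = B, ltgt = C, lob = \<lambda>y. if y \<in> Ob B then tO y c else undefined,
     lar = \<lambda>b. if b \<in> Hom B then tA b c else undefined,
     lput = \<lambda>y g. if y \<in> Ob B \<and> g \<in> Hom C \<and> Src C g = tO y c then fst (dec g) else undefined\<rparr>"

lemma catA[simp]: "is_category A" and catB[simp]: "is_category B" using L by auto

lemma dec_enc[simp]: "dec (enc p) = p" unfolding dec_def using inj by simp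

lemma S_closed: "b \<in> Hom B \<Longrightarrow> Src B b \<in> S \<Longrightarrow> Tgt B b \<in> S"
proof -
  assume b: "b \<in> Hom B" and s: "Src B b \<in> S"
  then obtain x where x: "x \<in> Ob A" "lob F x = Src B b" unfolding S_def by force
  have "lob F (Tgt A (lput F x b)) = Tgt B b" using lpt[OF L x(1) b] x by simp
  moreover have "Tgt A (lput F x b) \<in> Ob A" using L x b by simp
  ultimately show ?thesis unfolding S_def by (metis image_eqI)
qed

lemma tg_tg[simp]: "tg y (tg y c) = tg y c" unfolding tg_def by simp

lemma tO_tg[simp]: "tO y (tg y c) = tO y c" unfolding tO_def by simp

lemma tO_eq: "tO y c = tO y' c' \<longleftrightarrow> y = y' \<and> tg y c = tg y' c'"
  unfolding tO_def using inj by (auto dest: injD)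

lemma tA_eq: "tA b c = tA b' c' \<longleftrightarrow> b = b' \<and> tg (Src B b) c = tg (Src B b') c'"
  unfolding tA_def using inj by (auto dest: injD)

lemma dec_tA[simp]: "dec (tA b c) = (b, tg (Src B b) c)" unfolding tA_def by simp
lemma dec_tO[simp]: "dec (tO y c) = (y, tg y c)" unfolding tO_def by simp

lemma tg_tgt: "b \<in> Hom B \<Longrightarrow> tO (Tgt B b) (tg (Src B b) c) = tO (Tgt B b) c"
  unfolding tO_eq using S_closed unfolding tg_def by auto

lemma tO_shift: "tO y c = tO y c' \<Longrightarrow> b \<in> Hom B \<Longrightarrow> Src B b = y \<Longrightarrow> tO (Tgt B b) c = tO (Tgt B b) c'"
  unfolding tO_eq using S_closed unfolding tg_def by (auto split: if_splits)

lemma C_simps[simp]: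
  "Src C (tA b c) = tO (Src B b) c"
  "b \<in> Hom B \<Longrightarrow> Tgt C (tA b c) = tO (Tgt B b) c"
  "y \<in> Ob B \<Longrightarrow> Idt C (tO y c) = tA (Idt B y) c"
  "b \<in> Hom B \<Longrightarrow> b' \<in> Hom B \<Longrightarrow> Tgt B b = Src B b' \<Longrightarrow> Cmp C (tA b' c') (tA b c) = tA (Cmp B b' b) c"
  by (auto simp: C_def tg_tgt tA_eq)

lemma C_mem: "y \<in> Ob B \<Longrightarrow> c \<in> {c0,c1} \<Longrightarrow> tO y c \<in> Ob C"
  "b \<in> Hom B \<Longrightarrow> c \<in> {c0,c1} \<Longrightarrow> tA b c \<in> Hom C"
  unfolding C_def by auto

lemma HomC_E: "f \<in> Hom C \<Longrightarrow> (\<And>b c. f = tA b c \<Longrightarrow> b \<in> Hom B \<Longrightarrow> c \<in> {c0,c1} \<Longrightarrow> P) \<Longrightarrow> P"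
  unfolding C_def by auto
lemma ObC_E: "x \<in> Ob C \<Longrightarrow> (\<And>y c. x = tO y c \<Longrightarrow> y \<in> Ob B \<Longrightarrow> c \<in> {c0,c1} \<Longrightarrow> P) \<Longrightarrow> P"
  unfolding C_def by auto

lemma composable: "b \<in> Hom B \<Longrightarrow> Tgt C (tA b c) = Src C (tA b' c') \<Longrightarrow> Tgt B b = Src B b'"
  by (simp add: tO_eq)

lemma C_cat: "is_category C"
  unfolding is_category_def
proof (intro conjI ballI impI)
  fix f assume "f \<in> Hom C" then show "Src C f \<in> Ob C" "Tgt C f \<in> Ob C"
    by (auto elim!: HomC_E intro!: C_mem)
next
  fix x assume "x \<in> Ob C" then show "Idt C x \<in> Hom C" "Src C (Idt C x) = x" "Tgt C (Idt C x) = x"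
    by (auto elim!: ObC_E intro!: C_mem)
next
  fix f g assume f: "f \<in> Hom C" and g: "g \<in> Hom C" and fg: "Tgt C f = Src C g"
  obtain b c where b: "f = tA b c" "b \<in> Hom B" "c \<in> {c0,c1}" using f by (rule HomC_E)
  obtain b' c' where b': "g = tA b' c'" "b' \<in> Hom B" "c' \<in> {c0,c1}" using g by (rule HomC_E)
  have "Tgt B b = Src B b'" using composable b b' fg by simp
  then show "Cmp C g f \<in> Hom C" "Src C (Cmp C g f) = Src C f" "Tgt C (Cmp C g f) = Tgt C g"
    using b b' fg tO_shift[of "Src B b'" c c' b'] by (auto intro!: C_mem)
next
  fix f g h assume f: "f \<in> Hom C" and g: "g \<in> Hom C" and h: "h \<in> Hom C" and fg: "Tgt C f = Src C g"
    and gh: "Tgt C g = Src C h"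
  obtain b c where b: "f = tA b c" "b \<in> Hom B" "c \<in> {c0,c1}" using f by (rule HomC_E)
  obtain b' c' where b': "g = tA b' c'" "b' \<in> Hom B" "c' \<in> {c0,c1}" using g by (rule HomC_E)
  obtain b'' c'' where b'': "h = tA b'' c''" "b'' \<in> Hom B" "c'' \<in> {c0,c1}" using h by (rule HomC_E)
  have 1: "Tgt B b = Src B b'" using composable b b' fg by simp
  have 2: "Tgt B b' = Src B b''" using composable b' b'' gh by simp
  show "Cmp C h (Cmp C g f) = Cmp C (Cmp C h g) f"
    using b b' b'' 1 2 by (simp add: cassoc)
next
  fix f assume "f \<in> Hom C" then show "Cmp C (Idt C (Tgt C f)) f = f" "Cmp C f (Idt C (Src C f)) = f"
    by (auto elim!: HomC_E)
qed

lemma G_simps[simp]: "lsrc (G c) = B" "ltgt (G c) = C" unfolding G_def by auto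

lemma HomC_src: assumes "g \<in> Hom C" "Src C g = tO y c" "y \<in> Ob B"
  obtains b where "b \<in> Hom B" "Src B b = y" "g = tA b c"
proof -
  obtain b c' where b: "g = tA b c'" "b \<in> Hom B" "c' \<in> {c0,c1}" using assms(1) by (rule HomC_E)
  have "Src B b = y" "tg y c' = tg y c" using assms(2) b by (auto simp: tO_eq)
  then have "g = tA b c" using b by (simp add: tA_eq)
  then show ?thesis using that b \<open>Src B b = y\<close> by blast
qed

lemma G_lens: assumes c: "c \<in> {c0,c1}" shows "is_lens (G c)"
  unfolding is_lens_def Let_def G_simps
proof (intro conjI ballI allI impI C_cat catB)
  fix y b b' assume y: "y \<in> Ob B" and b: "b \<in> Hom C" and b': "b' \<in> Hom C"
    and bs: "Src C b = lob (G c) y" and bs': "Src C b' = Tgt C b"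
  obtain a where a: "a \<in> Hom B" "Src B a = y" "b = tA a c" using b bs y by (auto simp: G_def elim: HomC_src)
  obtain a' where a': "a' \<in> Hom B" "Src B a' = Tgt B a" "b' = tA a' c" using b' bs' a
    by (auto elim: HomC_src)
  show "lput (G c) y (Cmp C b' b) = Cmp B (lput (G c) (Tgt B (lput (G c) y b)) b') (lput (G c) y b)"
    using a a' y c by (auto simp: G_def intro!: C_mem)
qed (use c in \<open>auto simp: G_def intro!: C_mem elim: HomC_src\<close>)

lemma S_mem: "x \<in> Ob A \<Longrightarrow> lob F x \<in> S" unfolding S_def by blast

lemma GF_eq: "comp_lens (G c0) F = comp_lens (G c1) F"
proof (rule lens_eqI)
  show "lob (comp_lens (G c0) F) x = lob (comp_lens (G c1) F) x" for x
    using S_mem[of x] L by (auto simp: comp_lens_def G_def tO_def tg_def)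
  show "lar (comp_lens (G c0) F) f = lar (comp_lens (G c1) F) f" for f
    using S_mem[of "Src A f"] L by (auto simp: comp_lens_def G_def tA_def tg_def)
  have e: "x \<in> Ob A \<Longrightarrow> tO (lob F x) c0 = tO (lob F x) c1" for x
    using S_mem[of x] by (auto simp: tO_def tg_def)
  show "lput (comp_lens (G c0) F) x b = lput (comp_lens (G c1) F) x b" for x b
    using e[of x] L by (auto simp: comp_lens_def G_def)
qed simp_all

lemma G_ne: assumes "y \<in> Ob B" "y \<notin> S" shows "G c0 \<noteq> G c1"
proof
  assume "G c0 = G c1"
  then have "lob (G c0) y = lob (G c1) y" by simp
  then show False using assms c01 inj by (auto simp: G_def tO_def tg_def dest: injD)
qed

lemma epi_surj: assumes "epi LensCat F" shows "Ob B \<subseteq> lob F ` Ob A"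
proof
  fix y assume y: "y \<in> Ob B"
  show "y \<in> lob F ` Ob A"
  proof (rule ccontr)
    assume "y \<notin> lob F ` Ob A"
    then have "y \<notin> S" unfolding S_def .
    have "G c0 = G c1"
      by (rule epiD[OF assms]) (use G_lens GF_eq in auto)
    then show False using G_ne y \<open>y \<notin> S\<close> by blast
  qed
qed

end

lemma epi_surj_obj:
  assumes "infinite (UNIV :: 'u set)" and F: "is_lens (F :: 'u lens)" and e: "epi LensCat F"
  shows "Ob (ltgt F) \<subseteq> lob F ` Ob (lsrc F)"
proof -
  obtain enc :: "'u \<times> 'u \<Rightarrow> 'u" where inj: "inj enc" using enc_ex[OF assms(1)] by blast
  obtain c0 c1 :: 'u where "c0 \<noteq> c1"
    using assms(1) by (metis (full_types) finite.emptyI finite_insert insertI1 subsetI finite_subset)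
  then interpret dbl F enc c0 c1 using F inj by unfold_locales
  show ?thesis using epi_surj[OF e] .
qed



locale kp =
  fixes F :: "'u lens" and enc :: "'u \<times> 'u \<Rightarrow> 'u"
  assumes L: "is_lens F" and inj: "inj enc" and surj: "Ob (ltgt F) \<subseteq> lob F ` Ob (lsrc F)"
begin

abbreviation "A \<equiv> lsrc F"
abbreviation "B \<equiv> ltgt F"
definition "dec = inv enc"

lemma dec_enc[simp]: "dec (enc p) = p" unfolding dec_def using inj by simp
lemma enc_eq[simp]: "enc p = enc q \<longleftrightarrow> p = q" using inj by (auto dest: injD)

lemma catA[simp]: "is_category A" and catB[simp]: "is_category B" using L by auto
lemmas FF[simp] = lob[OF L] lar[OF L] lars[OF L] lart[OF L] lari[OF L] larc[OF L] lp[OF L] lps[OF L] lpa[OF L] lpi[OF L]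

definition K :: "'u smallcat" where
  "K = \<lparr>Ob = {enc (x,x') | x x'. x \<in> Ob A \<and> x' \<in> Ob A \<and> lob F x = lob F x'},
        Hom = {enc (a,a') | a a'. a \<in> Hom A \<and> a' \<in> Hom A \<and> lar F a = lar F a'},
        Src = \<lambda>g. enc (Src A (fst (dec g)), Src A (snd (dec g))),
        Tgt = \<lambda>g. enc (Tgt A (fst (dec g)), Tgt A (snd (dec g))),
        Idt = \<lambda>z. enc (Idt A (fst (dec z)), Idt A (snd (dec z))),
        Cmp = \<lambda>g f. enc (Cmp A (fst (dec g)) (fst (dec f)), Cmp A (snd (dec g)) (snd (dec f)))\<rparr>"

lemma K_simps[simp]:
  "Src K (enc (a,a')) = enc (Src A a, Src A a')"
  "Tgt K (enc (a,a')) = enc (Tgt A a, Tgt A a')"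
  "Idt K (enc (x,x')) = enc (Idt A x, Idt A x')"
  "Cmp K (enc (b,b')) (enc (a,a')) = enc (Cmp A b a, Cmp A b' a')"
  "enc (x,x') \<in> Ob K \<longleftrightarrow> x \<in> Ob A \<and> x' \<in> Ob A \<and> lob F x = lob F x'"
  "enc (a,a') \<in> Hom K \<longleftrightarrow> a \<in> Hom A \<and> a' \<in> Hom A \<and> lar F a = lar F a'"
  by (auto simp: K_def)

lemma HomK_E: "f \<in> Hom K \<Longrightarrow> (\<And>a a'. f = enc (a,a') \<Longrightarrow> a \<in> Hom A \<Longrightarrow> a' \<in> Hom A \<Longrightarrow> lar F a = lar F a' \<Longrightarrow> P) \<Longrightarrow> P"
  unfolding K_def by auto
lemma ObK_E: "z \<in> Ob K \<Longrightarrow> (\<And>x x'. z = enc (x,x') \<Longrightarrow> x \<in> Ob A \<Longrightarrow> x' \<in> Ob A \<Longrightarrow> lob F x = lob F x' \<Longrightarrow> P) \<Longrightarrow> P"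
  unfolding K_def by auto

lemma K_cat: "is_category K"
  unfolding is_category_def
proof (intro conjI ballI impI)
  fix f assume f: "f \<in> Hom K"
  obtain a a' where a: "f = enc (a,a')" "a \<in> Hom A" "a' \<in> Hom A" "lar F a = lar F a'" using f by (rule HomK_E)
  have "lob F (Src A a) = lob F (Src A a')" "lob F (Tgt A a) = lob F (Tgt A a')"
    using lars[OF L a(2)] lars[OF L a(3)] lart[OF L a(2)] lart[OF L a(3)] a(4) by simp_all
  then show "Src K f \<in> Ob K" "Tgt K f \<in> Ob K" using a by simp_all
next
  fix x assume "x \<in> Ob K" then show "Idt K x \<in> Hom K" "Src K (Idt K x) = x" "Tgt K (Idt K x) = x"
    by (auto elim!: ObK_E)
next
  fix f g assume f: "f \<in> Hom K" and g: "g \<in> Hom K" and fg: "Tgt K f = Src K g"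
  obtain a a' where a: "f = enc (a,a')" "a \<in> Hom A" "a' \<in> Hom A" "lar F a = lar F a'" using f by (rule HomK_E)
  obtain b b' where b: "g = enc (b,b')" "b \<in> Hom A" "b' \<in> Hom A" "lar F b = lar F b'" using g by (rule HomK_E)
  show "Cmp K g f \<in> Hom K" "Src K (Cmp K g f) = Src K f" "Tgt K (Cmp K g f) = Tgt K g"
    using a b fg by auto
next
  fix f g h assume f: "f \<in> Hom K" and g: "g \<in> Hom K" and h: "h \<in> Hom K" and fg: "Tgt K f = Src K g"
    and gh: "Tgt K g = Src K h"
  obtain a a' where a: "f = enc (a,a')" "a \<in> Hom A" "a' \<in> Hom A" using f by (rule HomK_E)
  obtain b b' where b: "g = enc (b,b')" "b \<in> Hom A" "b' \<in> Hom A" using g by (rule HomK_E)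
  obtain c c' where c: "h = enc (c,c')" "c \<in> Hom A" "c' \<in> Hom A" using h by (rule HomK_E)
  show "Cmp K h (Cmp K g f) = Cmp K (Cmp K h g) f"
    using a b c fg gh by (simp add: cassoc)
next
  fix f assume "f \<in> Hom K" then show "Cmp K (Idt K (Tgt K f)) f = f" "Cmp K f (Idt K (Src K f)) = f"
    by (auto elim!: HomK_E)
qed

lemma FsrcK: "a \<in> Hom A \<Longrightarrow> a' \<in> Hom A \<Longrightarrow> lar F a = lar F a' \<Longrightarrow> (lob F (Src A a) = lob F (Src A a')) \<longleftrightarrow> True"
  using lars[OF L, of a] lars[OF L, of a'] by simp
lemma FtgtK: "a \<in> Hom A \<Longrightarrow> a' \<in> Hom A \<Longrightarrow> lar F a = lar F a' \<Longrightarrow> (lob F (Tgt A a) = lob F (Tgt A a')) \<longleftrightarrow> True"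
  using lart[OF L, of a] lart[OF L, of a'] by simp
lemma lpi': "x \<in> Ob A \<Longrightarrow> lob F x = y \<Longrightarrow> lput F x (Idt B y) = Idt A x" by auto

definition u :: "'u lens" where
  "u = \<lparr>lsrc = K, ltgt = A, lob = \<lambda>z. if z \<in> Ob K then fst (dec z) else undefined,
     lar = \<lambda>g. if g \<in> Hom K then fst (dec g) else undefined,
     lput = \<lambda>z a. if z \<in> Ob K \<and> a \<in> Hom A \<and> Src A a = fst (dec z)
                  then enc (a, lput F (snd (dec z)) (lar F a)) else undefined\<rparr>"

definition v :: "'u lens" where
  "v = \<lparr>lsrc = K, ltgt = A, lob = \<lambda>z. if z \<in> Ob K then snd (dec z) else undefined,
     lar = \<lambda>g. if g \<in> Hom K then snd (dec g) else undefined,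
     lput = \<lambda>z a. if z \<in> Ob K \<and> a \<in> Hom A \<and> Src A a = snd (dec z)
                  then enc (lput F (fst (dec z)) (lar F a), a) else undefined\<rparr>"

lemma uv_simps[simp]: "lsrc u = K" "ltgt u = A" "lsrc v = K" "ltgt v = A"
  by (auto simp: u_def v_def)

lemma u_lens: "is_lens u"
  unfolding is_lens_def Let_def uv_simps
proof (intro conjI ballI allI impI K_cat catA)
  fix z a a' assume z: "z \<in> Ob K" and a: "a \<in> Hom A" and a': "a' \<in> Hom A"
    and as: "Src A a = lob u z" and as': "Src A a' = Tgt A a"
  obtain x x' where x: "z = enc (x,x')" "x \<in> Ob A" "x' \<in> Ob A" "lob F x = lob F x'" using z by (rule ObK_E)
  have ax: "Src A a = x" using as x by (simp add: u_def)
  have t: "lob F (Tgt A (lput F x' (lar F a))) = Tgt B (lar F a)"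
    using lpt[OF L, of x' "lar F a"] x a ax by simp
  show "lput u z (Cmp A a' a) = Cmp K (lput u (Tgt K (lput u z a)) a') (lput u z a)"
    using x a a' ax as' t lpc[OF L, of x' "lar F a" "lar F a'"] by (simp add: u_def)
qed (auto simp: u_def elim!: ObK_E HomK_E simp: lpt[OF L] FsrcK FtgtK lpi')

lemma v_lens: "is_lens v"
  unfolding is_lens_def Let_def uv_simps
proof (intro conjI ballI allI impI K_cat catA)
  fix z a a' assume z: "z \<in> Ob K" and a: "a \<in> Hom A" and a': "a' \<in> Hom A"
    and as: "Src A a = lob v z" and as': "Src A a' = Tgt A a"
  obtain x x' where x: "z = enc (x,x')" "x \<in> Ob A" "x' \<in> Ob A" "lob F x = lob F x'" using z by (rule ObK_E)
  have ax: "Src A a = x'" using as x by (simp add: v_def)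
  have t: "lob F (Tgt A (lput F x (lar F a))) = Tgt B (lar F a)"
    using lpt[OF L, of x "lar F a"] x a ax by simp
  show "lput v z (Cmp A a' a) = Cmp K (lput v (Tgt K (lput v z a)) a') (lput v z a)"
    using x a a' ax as' t lpc[OF L, of x "lar F a" "lar F a'"] by (simp add: v_def)
qed (auto simp: v_def elim!: ObK_E HomK_E simp: lpt[OF L] FsrcK FtgtK lpi')

lemma Fu_Fv: "comp_lens F u = comp_lens F v"
proof (rule lens_eqI)
  show "lob (comp_lens F u) z = lob (comp_lens F v) z" for z
    by (cases "z \<in> Ob K") (auto simp: comp_lens_def u_def v_def elim: ObK_E)
  show "lar (comp_lens F u) f = lar (comp_lens F v) f" for f
    by (cases "f \<in> Hom K") (auto simp: comp_lens_def u_def v_def elim: HomK_E)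
  show "lput (comp_lens F u) z c = lput (comp_lens F v) z c" for z c
  proof (cases "z \<in> Ob K")
    case True
    then obtain x x' where x: "z = enc (x,x')" "x \<in> Ob A" "x' \<in> Ob A" "lob F x = lob F x'" by (rule ObK_E)
    show ?thesis using x by (auto simp: comp_lens_def u_def v_def)
  qed (simp add: comp_lens_def)
qed simp_all

lemma uv_hom: "u \<in> Hom LensCat" "v \<in> Hom LensCat" using u_lens v_lens by auto

definition "pick y = (SOME x. x \<in> Ob A \<and> lob F x = y)"

lemma pick: assumes "y \<in> Ob B" shows "pick y \<in> Ob A \<and> lob F (pick y) = y"
proof -
  obtain x where "x \<in> Ob A" "lob F x = y" using surj assms by force
  then show ?thesis unfolding pick_def using someI[of "\<lambda>x. x \<in> Ob A \<and> lob F x = y" x] by blast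
qed

definition kmap :: "'u lens \<Rightarrow> 'u lens" where
  "kmap h = \<lparr>lsrc = B, ltgt = ltgt h,
     lob = \<lambda>y. if y \<in> Ob B then lob h (pick y) else undefined,
     lar = \<lambda>b. if b \<in> Hom B then lar h (lput F (pick (Src B b)) b) else undefined,
     lput = \<lambda>y d. if y \<in> Ob B \<and> d \<in> Hom (ltgt h) \<and> Src (ltgt h) d = lob h (pick y)
                 then lar F (lput h (pick y) d) else undefined\<rparr>"

lemma kmap_simps[simp]: "lsrc (kmap h) = B" "ltgt (kmap h) = ltgt h" by (auto simp: kmap_def)

context
  fixes h :: "'u lens" assumes H: "is_lens h" and hA: "lsrc h = A" and huv: "comp_lens h u = comp_lens h v"
begin

abbreviation "D \<equiv> ltgt h"
lemmas HH = lob[OF H] lar[OF H] lars[OF H] lart[OF H] lari[OF H] larc[OF H] lp[OF H] lps[OF H] lpa[OF H] lpi[OF H]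
lemmas HH'[simp] = HH[unfolded hA]

lemma c1: assumes "x \<in> Ob A" "x' \<in> Ob A" "lob F x = lob F x'" shows "lob h x = lob h x'"
proof -
  have "lob (comp_lens h u) (enc (x,x')) = lob (comp_lens h v) (enc (x,x'))" using huv by simp
  then show ?thesis using assms by (simp add: comp_lens_def u_def v_def)
qed

lemma c2: assumes "a \<in> Hom A" "a' \<in> Hom A" "lar F a = lar F a'" shows "lar h a = lar h a'"
proof -
  have "lar (comp_lens h u) (enc (a,a')) = lar (comp_lens h v) (enc (a,a'))" using huv by simp
  then show ?thesis using assms by (simp add: comp_lens_def u_def v_def)
qed

lemma c3: assumes x: "x \<in> Ob A" "x' \<in> Ob A" "lob F x = lob F x'" and d: "d \<in> Hom D" "Src D d = lob h x"
  shows "lput h x d = lput F x (lar F (lput h x' d))"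
proof -
  have E: "lput (comp_lens h u) (enc (x,x')) d = lput (comp_lens h v) (enc (x,x')) d" using huv by simp
  have z: "enc (x,x') \<in> Ob K" using x by simp
  have ou: "lob u (enc (x,x')) = x" and ov: "lob v (enc (x,x')) = x'" using z by (simp_all add: u_def v_def)
  have hx': "Src D d = lob h x'" using c1[OF x] d by simp
  have l: "lput (comp_lens h u) (enc (x,x')) d = lput u (enc (x,x')) (lput h x d)"
    unfolding comp_lens_def using z d ou by simp
  have r: "lput (comp_lens h v) (enc (x,x')) d = lput v (enc (x,x')) (lput h x' d)"
    unfolding comp_lens_def using z d ov hx' by simp
  have p1: "lput h x d \<in> Hom A" "Src A (lput h x d) = x" using HH'(7,8) x d by auto
  have p2: "lput h x' d \<in> Hom A" "Src A (lput h x' d) = x'" using HH'(7,8) x hx' d by auto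
  have "lput u (enc (x,x')) (lput h x d) = enc (lput h x d, lput F x' (lar F (lput h x d)))"
    unfolding u_def using z p1 by simp
  moreover have "lput v (enc (x,x')) (lput h x' d) = enc (lput F x (lar F (lput h x' d)), lput h x' d)"
    unfolding v_def using z p2 by simp
  ultimately show ?thesis using E l r by simp
qed

lemma c3': assumes "x \<in> Ob A" "d \<in> Hom D" "Src D d = lob h x"
  shows "lput F x (lar F (lput h x d)) = lput h x d"
  by (rule c3[OF assms(1) assms(1) refl assms(2,3), symmetric])

lemma c4: assumes x: "x \<in> Ob A" "x' \<in> Ob A" "lob F x = lob F x'" and d: "d \<in> Hom D" "Src D d = lob h x"
  shows "lar F (lput h x d) = lar F (lput h x' d)"
proof -
  have hx': "Src D d = lob h x'" using c1[OF x] d by simp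
  have p2: "lput h x' d \<in> Hom A" "Src A (lput h x' d) = x'" using HH'(7,8) x hx' d by auto
  have b: "lar F (lput h x' d) \<in> Hom B" "Src B (lar F (lput h x' d)) = lob F x"
    using p2 x lars[OF L p2(1)] by auto
  have "lar F (lput h x d) = lar F (lput F x (lar F (lput h x' d)))"
    by (subst c3[OF x d]) (rule refl)
  also have "\<dots> = lar F (lput h x' d)" using lpa[OF L x(1) b] .
  finally show ?thesis .
qed


lemma pick1: "y \<in> Ob B \<Longrightarrow> pick y \<in> Ob A" and pick2: "y \<in> Ob B \<Longrightarrow> lob F (pick y) = y"
  using pick by auto

lemma k_lens: "is_lens (kmap h)"
  unfolding is_lens_def Let_def kmap_simps
proof (intro conjI ballI allI impI catB)
  show "is_category D" using H by simp
next
  fix y assume "y \<in> Ob B" then show "lob (kmap h) y \<in> Ob D" by (simp add: kmap_def pick1)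
next
  fix b assume b: "b \<in> Hom B"
  let ?x = "pick (Src B b)"
  have x: "?x \<in> Ob A" "lob F ?x = Src B b" using pick b by auto
  have p: "lput F ?x b \<in> Hom A" "Src A (lput F ?x b) = ?x" using x b by auto
  have t: "lob F (Tgt A (lput F ?x b)) = Tgt B b" using lpt[OF L x(1) b] x by simp
  have tt: "Tgt A (lput F ?x b) \<in> Ob A" using p by simp
  have pt: "pick (Tgt B b) \<in> Ob A" "lob F (pick (Tgt B b)) = Tgt B b" using pick b by auto
  show "lar (kmap h) b \<in> Hom D" using b p by (simp add: kmap_def)
  show "Src D (lar (kmap h) b) = lob (kmap h) (Src B b)" using b p by (simp add: kmap_def)
  show "Tgt D (lar (kmap h) b) = lob (kmap h) (Tgt B b)"
    using b p c1[OF tt pt(1)] t pt by (simp add: kmap_def)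
next
  fix y assume y: "y \<in> Ob B"
  have x: "pick y \<in> Ob A" "lob F (pick y) = y" using pick y by auto
  show "lar (kmap h) (Idt B y) = Idt D (lob (kmap h) y)"
    using y x lpi[OF L x(1)] by (simp add: kmap_def)
next
  fix b b' assume b: "b \<in> Hom B" and b': "b' \<in> Hom B" and bb: "Tgt B b = Src B b'"
  let ?x = "pick (Src B b)"
  have x: "?x \<in> Ob A" "lob F ?x = Src B b" using pick b by auto
  have p: "lput F ?x b \<in> Hom A" "Src A (lput F ?x b) = ?x" using x b by auto
  let ?x' = "Tgt A (lput F ?x b)"
  have t: "lob F ?x' = Tgt B b" using lpt[OF L x(1) b] x by simp
  have tt: "?x' \<in> Ob A" using p by simp
  have p': "lput F ?x' b' \<in> Hom A" "Src A (lput F ?x' b') = ?x'" "lar F (lput F ?x' b') = b'"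
    using tt b' t bb by auto
  let ?y = "pick (Src B b')"
  have y: "?y \<in> Ob A" "lob F ?y = Src B b'" using pick b' by auto
  have q: "lput F ?y b' \<in> Hom A" "lar F (lput F ?y b') = b'" using y b' by auto
  have e1: "lput F ?x (Cmp B b' b) = Cmp A (lput F ?x' b') (lput F ?x b)"
    using lpc[OF L x(1) b b'] x bb by simp
  have e2: "lar h (lput F ?y b') = lar h (lput F ?x' b')"
    using c2[OF q(1) p'(1)] q p' by simp
  show "lar (kmap h) (Cmp B b' b) = Cmp D (lar (kmap h) b') (lar (kmap h) b)"
    using b b' bb e1 e2 p p' by (simp add: kmap_def)
next
  fix y d assume y: "y \<in> Ob B" and d: "d \<in> Hom D" and ds: "Src D d = lob (kmap h) y"
  have x: "pick y \<in> Ob A" "lob F (pick y) = y" using pick y by auto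
  have ds': "Src D d = lob h (pick y)" using ds y by (simp add: kmap_def)
  have p: "lput h (pick y) d \<in> Hom A" "Src A (lput h (pick y) d) = pick y" "lar h (lput h (pick y) d) = d"
    using x d ds' by auto
  have fb: "lar F (lput h (pick y) d) \<in> Hom B" "Src B (lar F (lput h (pick y) d)) = y"
    using p x by auto
  show "lput (kmap h) y d \<in> Hom B" using y d ds' fb by (simp add: kmap_def)
  show "Src B (lput (kmap h) y d) = y" using y d ds' fb by (simp add: kmap_def)
  show "lar (kmap h) (lput (kmap h) y d) = d"
    using y d ds' fb c3'[OF x(1) d ds'] p by (simp add: kmap_def)
next
  fix y assume y: "y \<in> Ob B"
  have x: "pick y \<in> Ob A" "lob F (pick y) = y" using pick y by auto
  have o: "lob h (pick y) \<in> Ob D" using x by simp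
  have cD: "is_category D" using H by simp
  show "lput (kmap h) y (Idt D (lob (kmap h) y)) = Idt B y"
    using y x o ci[OF cD o] cis[OF cD o] by (simp add: kmap_def)
next
  fix y d d' assume y: "y \<in> Ob B" and d: "d \<in> Hom D" and d': "d' \<in> Hom D"
    and ds: "Src D d = lob (kmap h) y" and ds': "Src D d' = Tgt D d"
  have x: "pick y \<in> Ob A" "lob F (pick y) = y" using pick y by auto
  let ?x = "pick y"
  have dsx: "Src D d = lob h ?x" using ds y by (simp add: kmap_def)
  have p: "lput h ?x d \<in> Hom A" "Src A (lput h ?x d) = ?x" "lar h (lput h ?x d) = d"
    using x d dsx by auto
  let ?x' = "Tgt A (lput h ?x d)"
  have tt: "?x' \<in> Ob A" using p by simp
  have ht: "lob h ?x' = Tgt D d" using lpt[OF H, of ?x d] x d dsx hA by simp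
  have fb: "lar F (lput h ?x d) \<in> Hom B" "Src B (lar F (lput h ?x d)) = y"
    "Tgt B (lar F (lput h ?x d)) = lob F ?x'"
    using p x by auto
  let ?z = "pick (lob F ?x')"
  have z: "?z \<in> Ob A" "lob F ?z = lob F ?x'" using pick tt by auto
  have hz: "lob h ?z = lob h ?x'" using c1[OF z(1) tt z(2)] .
  have e1: "lput h ?x (Cmp D d' d) = Cmp A (lput h ?x' d') (lput h ?x d)"
    using lpc[OF H, of ?x d d'] x d d' dsx ds' hA by simp
  have q: "lput h ?x' d' \<in> Hom A" "Src A (lput h ?x' d') = ?x'" using tt d' ds' ht by auto
  have e2: "lar F (lput h ?z d') = lar F (lput h ?x' d')"
    using c4[OF z(1) tt z(2) d'] ds' ht hz by simp
  have cm: "Cmp D d' d \<in> Hom D" "Src D (Cmp D d' d) = Src D d" using d d' ds' H by auto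
  show "lput (kmap h) y (Cmp D d' d) = Cmp B (lput (kmap h) (Tgt B (lput (kmap h) y d)) d') (lput (kmap h) y d)"
    using y d d' dsx ds' fb e1 e2 cm p q ht hz tt by (simp add: kmap_def)
qed (auto simp: kmap_def)

lemma k_comp: "comp_lens (kmap h) F = h"
proof (rule lens_eqI)
  show "lsrc (comp_lens (kmap h) F) = lsrc h" using hA by simp
  show "ltgt (comp_lens (kmap h) F) = ltgt h" by simp
  show "lob (comp_lens (kmap h) F) x = lob h x" for x
  proof (cases "x \<in> Ob A")
    case True
    have z: "pick (lob F x) \<in> Ob A" "lob F (pick (lob F x)) = lob F x" using pick True by auto
    show ?thesis using True c1[OF z(1) True z(2)] by (simp add: comp_lens_def kmap_def)
  qed (simp add: comp_lens_def lobe[OF H, unfolded hA])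
  show "lar (comp_lens (kmap h) F) f = lar h f" for f
  proof (cases "f \<in> Hom A")
    case True
    let ?z = "pick (lob F (Src A f))"
    have z: "?z \<in> Ob A" "lob F ?z = lob F (Src A f)" using pick True by auto
    have q: "lput F ?z (lar F f) \<in> Hom A" "lar F (lput F ?z (lar F f)) = lar F f" using z True by auto
    show ?thesis using True c2[OF q(1) True q(2)] by (simp add: comp_lens_def kmap_def)
  qed (simp add: comp_lens_def lare[OF H, unfolded hA])
  show "lput (comp_lens (kmap h) F) x d = lput h x d" for x d
  proof (cases "x \<in> Ob A \<and> d \<in> Hom D \<and> Src D d = lob h x")
    case True
    then have x: "x \<in> Ob A" "d \<in> Hom D" "Src D d = lob h x" by auto
    let ?z = "pick (lob F x)"
    have z: "?z \<in> Ob A" "lob F ?z = lob F x" using pick x by auto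
    have hz: "lob h ?z = lob h x" using c1[OF z(1) x(1) z(2)] .
    have "lput F x (lar F (lput h ?z d)) = lput h x d"
      using c3[OF x(1) z(1) z(2)[symmetric] x(2,3)] by simp
    then show ?thesis using x hz by (simp add: comp_lens_def kmap_def)
  next
    case False
    have "lput h x d = undefined" using lpe[OF H] False hA by auto
    moreover have "lput (comp_lens (kmap h) F) x d = undefined"
    proof (cases "x \<in> Ob A")
      case True
      have z: "pick (lob F x) \<in> Ob A" "lob F (pick (lob F x)) = lob F x" using pick True by auto
      show ?thesis using False True c1[OF z(1) True z(2)] by (auto simp: comp_lens_def kmap_def)
    qed (simp add: comp_lens_def)
    ultimately show ?thesis by simp
  qed
qed

end



lemma coeq: assumes ep: "epi LensCat F" shows "coequalizer LensCat u v F"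
  unfolding coequalizer_def
proof (intro conjI ballI impI)
  show "u \<in> Hom LensCat" "v \<in> Hom LensCat" by (rule uv_hom)+
  show "F \<in> Hom LensCat" using L by simp
  show "Cmp LensCat F u = Cmp LensCat F v" using Fu_Fv by simp
  fix h assume h: "h \<in> Hom LensCat" and hs: "Src LensCat h = Tgt LensCat u" and huv: "Cmp LensCat h u = Cmp LensCat h v"
  have H: "is_lens h" and hA: "lsrc h = A" and huv': "comp_lens h u = comp_lens h v" using h hs huv by auto
  show "\<exists>!k. k \<in> Hom LensCat \<and> Src LensCat k = Tgt LensCat F \<and> Tgt LensCat k = Tgt LensCat h \<and> Cmp LensCat k F = h"
  proof (rule ex1I[of _ "kmap h"])
    show "kmap h \<in> Hom LensCat \<and> Src LensCat (kmap h) = Tgt LensCat F \<and> Tgt LensCat (kmap h) = Tgt LensCat h \<and> Cmp LensCat (kmap h) F = h"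
      using k_lens[OF H hA huv'] k_comp[OF H hA huv'] by simp
    fix k assume k: "k \<in> Hom LensCat \<and> Src LensCat k = Tgt LensCat F \<and> Tgt LensCat k = Tgt LensCat h \<and> Cmp LensCat k F = h"
    show "k = kmap h"
      by (rule epiD[OF ep]) (use k k_lens[OF H hA huv'] k_comp[OF H hA huv'] in auto)
  qed
qed (simp_all)

end

theorem main_thm:
  fixes e :: "'u lens"
  assumes "infinite (UNIV :: 'u set)"
    and "e \<in> Hom LensCat"
  shows "(epi LensCat e \<longleftrightarrow> regular_epi LensCat e) \<and>
         (epi LensCat e \<longleftrightarrow> strong_epi LensCat e) \<and>
         (epi LensCat e \<longleftrightarrow> extremal_epi LensCat e)"
proof -
  have L: "is_lens e" using assms(2) by simp
  have er: "regular_epi LensCat e" if ep: "epi LensCat e"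
  proof -
    have surj: "Ob (ltgt e) \<subseteq> lob e ` Ob (lsrc e)" by (rule epi_surj_obj[OF assms(1) L ep])
    obtain enc :: "'u \<times> 'u \<Rightarrow> 'u" where inj: "inj enc" using enc_ex[OF assms(1)] by blast
    interpret kp e enc using L inj surj by unfold_locales
    show ?thesis unfolding regular_epi_def using coeq[OF ep] by blast
  qed
  have re: "epi LensCat e" if "regular_epi LensCat e" by (rule reg_epi[OF LensCat_cat that])
  have se: "epi LensCat e" if "strong_epi LensCat e" using that unfolding strong_epi_def by blast
  have xe: "epi LensCat e" if "extremal_epi LensCat e" using that unfolding extremal_epi_def by blast
  have es: "strong_epi LensCat e" if "epi LensCat e" by (rule reg_strong[OF LensCat_cat er[OF that]])
  have ex: "extremal_epi LensCat e" if "epi LensCat e" by (rule strong_extremal[OF LensCat_cat es[OF that]])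
  show ?thesis using er re se xe es ex by blast
qed


theorem corollary6p5:
  fixes e :: "'u lens"
  assumes "infinite (UNIV :: 'u set)"
    and "e \<in> Hom LensCat"
  shows "(epi LensCat e \<longleftrightarrow> regular_epi LensCat e) \<and>
         (epi LensCat e \<longleftrightarrow> strong_epi LensCat e) \<and>
         (epi LensCat e \<longleftrightarrow> extremal_epi LensCat e)"
  by (rule main_thm[OF assms])

end
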